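(* Let $G=(V,E)$ be a finite simple graph and $v\in V$. Let $G-v$ denote the graph obtained from $G$ by deleting $v$ and all edges incident to $v$. Then $$\gamma_{coe}(G)-\deg(v)-1\leq \gamma_{coe}(G-v)\leq \gamma_{coe}(G)+\deg(v)-1.$$
   Context: All graphs are finite and simple. For a graph $G=(V,E)$ and $v\in V$, $N_G(v)=\{u\in V: uv\in E\}$ and $\deg(v)=|N_G(v)|$. A set $D\subseteq V$ is a dominating set if every vertex of $V\setminus D$ is adjacent to at least one vertex of $D$. A dominating set $D$ is a co-even dominating set if $\deg(v)$ is even for every $v\in V\setminus D$ (degrees taken in the graph under consideration). The co-even domination number $\gamma_{coe}(G)$ is the minimum cardinality of a co-even dominating set of $G$. *)

theory Defs
  imports Main
begin

definition simple_graph :: "'a set \<Rightarrow> ('a \<Rightarrow> 'a \<Rightarrow> bool) \<Rightarrow> bool" where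
  "simple_graph V E \<longleftrightarrow> finite V \<and> (\<forall>x y. E x y \<longrightarrow> E y x)
     \<and> (\<forall>x. \<not> E x x) \<and> (\<forall>x y. E x y \<longrightarrow> x \<in> V \<and> y \<in> V)"

definition nbhd :: "'a set \<Rightarrow> ('a \<Rightarrow> 'a \<Rightarrow> bool) \<Rightarrow> 'a \<Rightarrow> 'a set" where
  "nbhd V E v = {u \<in> V. E u v}"

definition deg :: "'a set \<Rightarrow> ('a \<Rightarrow> 'a \<Rightarrow> bool) \<Rightarrow> 'a \<Rightarrow> nat" where
  "deg V E v = card (nbhd V E v)"

definition dominating :: "'a set \<Rightarrow> ('a \<Rightarrow> 'a \<Rightarrow> bool) \<Rightarrow> 'a set \<Rightarrow> bool" where
  "dominating V E D \<longleftrightarrow> D \<subseteq> V \<and> (\<forall>x \<in> V - D. \<exists>d \<in> D. E x d)"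

definition coeven_dominating :: "'a set \<Rightarrow> ('a \<Rightarrow> 'a \<Rightarrow> bool) \<Rightarrow> 'a set \<Rightarrow> bool" where
  "coeven_dominating V E D \<longleftrightarrow> dominating V E D \<and> (\<forall>x \<in> V - D. even (deg V E x))"

definition gamma_coe :: "'a set \<Rightarrow> ('a \<Rightarrow> 'a \<Rightarrow> bool) \<Rightarrow> nat" where
  "gamma_coe V E = Min {card D | D. coeven_dominating V E D}"

definition del_vertex_V :: "'a set \<Rightarrow> 'a \<Rightarrow> 'a set" where
  "del_vertex_V V v = V - {v}"

definition del_vertex_E :: "('a \<Rightarrow> 'a \<Rightarrow> bool) \<Rightarrow> 'a \<Rightarrow> 'a \<Rightarrow> 'a \<Rightarrow> bool" where
  "del_vertex_E E v = (\<lambda>x y. E x y \<and> x \<noteq> v \<and> y \<noteq> v)"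

end

theory Submission
  imports Defs
begin

lemma cd_set_finite:
  assumes "finite V"
  shows "finite {card D | D. coeven_dominating V E D}"
proof -
  have "{card D | D. coeven_dominating V E D} \<subseteq> card ` Pow V"
    by (auto simp: coeven_dominating_def dominating_def)
  thus ?thesis using assms finite_subset by blast
qed

lemma cd_V: "coeven_dominating V E V"
  by (auto simp: coeven_dominating_def dominating_def)

lemma gamma_le:
  assumes "finite V" "coeven_dominating V E D"
  shows "gamma_coe V E \<le> card D"
  unfolding gamma_coe_def using assms cd_set_finite[OF assms(1)]
  by (intro Min_le) auto

lemma gamma_ex:
  assumes "finite V"
  shows "\<exists>D. coeven_dominating V E D \<and> card D = gamma_coe V E"
proof -
  have "gamma_coe V E \<in> {card D | D. coeven_dominating V E D}"
    unfolding gamma_coe_def using cd_set_finite[OF assms] cd_V[of V E]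
    by (intro Min_in) auto
  thus ?thesis by auto
qed

lemma nbhd_same:
  assumes "simple_graph V E" "x \<noteq> v" "x \<notin> nbhd V E v"
  shows "nbhd (del_vertex_V V v) (del_vertex_E E v) x = nbhd V E x"
  using assms unfolding nbhd_def del_vertex_V_def del_vertex_E_def simple_graph_def
  by auto

theorem mainTheorem2:
  fixes V :: "'a set" and E :: "'a \<Rightarrow> 'a \<Rightarrow> bool" and v :: 'a
  assumes "simple_graph V E" and "v \<in> V"
  shows "int (gamma_coe V E) - int (deg V E v) - 1
           \<le> int (gamma_coe (del_vertex_V V v) (del_vertex_E E v))
       \<and> int (gamma_coe (del_vertex_V V v) (del_vertex_E E v))
           \<le> int (gamma_coe V E) + int (deg V E v) - 1"
proof -
  let ?V = "del_vertex_V V v" and ?E = "del_vertex_E E v" and ?N = "nbhd V E v"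
  have fin: "finite V" using assms(1) by (simp add: simple_graph_def)
  have fin': "finite ?V" using fin by (simp add: del_vertex_V_def)
  have finN: "finite ?N" using fin by (simp add: nbhd_def)
  have sym: "\<And>x y. E x y \<Longrightarrow> E y x" and irr: "\<And>x. \<not> E x x"
    and inV: "\<And>x y. E x y \<Longrightarrow> x \<in> V \<and> y \<in> V"
    using assms(1) by (auto simp: simple_graph_def)
  have degsame: "\<And>x. x \<noteq> v \<Longrightarrow> x \<notin> ?N \<Longrightarrow> deg ?V ?E x = deg V E x"
    using nbhd_same[OF assms(1)] by (simp add: deg_def)
  have part1: "gamma_coe V E \<le> gamma_coe ?V ?E + deg V E v + 1"
  proof -
    obtain D' where D': "coeven_dominating ?V ?E D'" "card D' = gamma_coe ?V ?E"
      using gamma_ex[OF fin'] by blast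
    let ?D = "D' \<union> insert v ?N"
    have "coeven_dominating V E ?D"
      unfolding coeven_dominating_def dominating_def
    proof (intro conjI ballI)
      show "?D \<subseteq> V" using D'(1) assms(2)
        by (auto simp: coeven_dominating_def dominating_def del_vertex_V_def nbhd_def)
    next
      fix x assume x: "x \<in> V - ?D"
      then have "x \<in> ?V - D'" by (auto simp: del_vertex_V_def)
      then obtain d where "d \<in> D'" "?E x d" using D'(1)
        unfolding coeven_dominating_def dominating_def by blast
      thus "\<exists>d\<in>?D. E x d" by (auto simp: del_vertex_E_def)
    next
      fix x assume x: "x \<in> V - ?D"
      then have "x \<in> ?V - D'" by (auto simp: del_vertex_V_def)
      then have "even (deg ?V ?E x)" using D'(1) by (auto simp: coeven_dominating_def)
      moreover have "x \<noteq> v" "x \<notin> ?N" using x by auto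
      ultimately show "even (deg V E x)" using degsame by simp
    qed
    hence "gamma_coe V E \<le> card ?D" using gamma_le[OF fin] by blast
    also have "card ?D \<le> card D' + card (insert v ?N)" by (rule card_Un_le)
    also have "card (insert v ?N) \<le> Suc (card ?N)" using card_insert_le_m1 finN
      by (simp add: card_insert_if)
    finally show ?thesis using D'(2) by (simp add: deg_def)
  qed
  have part2: "gamma_coe ?V ?E + 1 \<le> gamma_coe V E + deg V E v"
  proof -
    obtain D where D: "coeven_dominating V E D" "card D = gamma_coe V E"
      using gamma_ex[OF fin] by blast
    have DV: "D \<subseteq> V" using D(1) by (simp add: coeven_dominating_def dominating_def)
    have finD: "finite D" using DV fin finite_subset by blast
    let ?D' = "(D - {v}) \<union> ?N"
    have cd: "coeven_dominating ?V ?E ?D'"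
      unfolding coeven_dominating_def dominating_def
    proof (intro conjI ballI)
      show "?D' \<subseteq> ?V" using DV irr
        by (auto simp: del_vertex_V_def nbhd_def)
    next
      fix x assume x: "x \<in> ?V - ?D'"
      then have xV: "x \<in> V - D" "x \<noteq> v" "x \<notin> ?N" by (auto simp: del_vertex_V_def)
      then obtain d where d: "d \<in> D" "E x d" using D(1)
        unfolding coeven_dominating_def dominating_def by blast
      have "d \<noteq> v" using d xV inV by (auto simp: nbhd_def)
      thus "\<exists>d\<in>?D'. ?E x d" using d xV by (auto simp: del_vertex_E_def)
    next
      fix x assume x: "x \<in> ?V - ?D'"
      then have xV: "x \<in> V - D" "x \<noteq> v" "x \<notin> ?N" by (auto simp: del_vertex_V_def)
      then show "even (deg ?V ?E x)" using D(1) degsame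
        by (auto simp: coeven_dominating_def)
    qed
    hence g: "gamma_coe ?V ?E \<le> card ?D'" using gamma_le[OF fin'] by blast
    have cU: "card ?D' + card ((D - {v}) \<inter> ?N) = card (D - {v}) + card ?N"
      using finD finN card_Un_Int[of "D - {v}" ?N] by auto
    show ?thesis
    proof (cases "v \<in> D")
      case True
      have "card (D - {v}) + 1 = card D" using True finD
        by (metis One_nat_def Suc_pred card.remove card_gt_0_iff empty_iff plus_1_eq_Suc add.commute)
      thus ?thesis using g cU D(2) by (simp add: deg_def)
    next
      case False
      have "v \<in> V - D" using False assms(2) by auto
      then obtain d where d: "d \<in> D" "E v d" using D(1)
        unfolding coeven_dominating_def dominating_def by blast
      have "d \<in> (D - {v}) \<inter> ?N" using d False inV sym by (auto simp: nbhd_def)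
      hence "card ((D - {v}) \<inter> ?N) \<ge> 1" using finD
        by (metis One_nat_def Suc_leI card_gt_0_iff empty_iff finite_Diff finite_Int)
      thus ?thesis using g cU D(2) False by (simp add: deg_def)
    qed
  qed
  show ?thesis using part1 part2 by linarith
qed

end
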